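(* $o(\mathsf{T_f}(1))=\omega$.
   Context: $1$ denotes the one-element quasi-order $\{0\}$. Trees: for a non-empty quasi-order $Q$, $\mathsf{T_f}(Q)$ is the smallest class containing the leaf $\cdot q$ for each $q\in Q$, and containing $\cdot(\tau_0,\dots,\tau_{k-1})$ (an unlabelled root whose children are the $\tau_i$) for every finite set $\{\tau_0,\dots,\tau_{k-1}\}\subseteq\mathsf{T_f}(Q)$ with $k\ge1$. Its order $\le_T$ is defined recursively: - $\cdot x\le_T\cdot y$ iff $x\le_Q y$; - $\cdot x\le_T\cdot(\tau_j)_{j<l}$ iff $\cdot x\le_T\tau_j$ for some $j$; - $\cdot(\sigma_i)_{i<k}\le_T\cdot(\tau_j)_{j<l}$ iff every $\sigma_i$ is $\le_T$ some $\tau_j$; - a non-leaf tree is never $\le_T$ a leaf. For a well-quasi-order $P$, $o(P)$ is the supremum of the order types of linearizations of $P$, i.e. linear quasi-orders on the same set extending its order. *)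

theory Defs
  imports Main "HOL-Library.FSet"
begin

datatype 'a tree = Leaf 'a | Node "'a tree fset"

inductive in_Tf :: "'a set \<Rightarrow> 'a tree \<Rightarrow> bool" for Q :: "'a set" where
  "x \<in> Q \<Longrightarrow> in_Tf Q (Leaf x)"
| "ts \<noteq> {||} \<Longrightarrow> (\<forall>t\<in>fset ts. in_Tf Q t) \<Longrightarrow> in_Tf Q (Node ts)"

definition Tf :: "'a set \<Rightarrow> 'a tree set" where
  "Tf Q = {t. in_Tf Q t}"

inductive tree_le :: "('a \<Rightarrow> 'a \<Rightarrow> bool) \<Rightarrow> 'a tree \<Rightarrow> 'a tree \<Rightarrow> bool"
  for le :: "'a \<Rightarrow> 'a \<Rightarrow> bool" where
  leaf_leaf: "le x y \<Longrightarrow> tree_le le (Leaf x) (Leaf y)"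
| leaf_node: "t \<in> fset ts \<Longrightarrow> tree_le le (Leaf x) t \<Longrightarrow> tree_le le (Leaf x) (Node ts)"
| node_node: "(\<forall>s\<in>fset ss. \<exists>t\<in>fset ts. tree_le le s t) \<Longrightarrow> tree_le le (Node ss) (Node ts)"

text \<open>The one-element quasi-order 1 = {0}, realised on the type unit.\<close>
definition one_carrier :: "unit set" where "one_carrier = {()}"
definition one_le :: "unit \<Rightarrow> unit \<Rightarrow> bool" where "one_le x y = (x = y)"

definition linearization :: "'a set \<Rightarrow> ('a \<Rightarrow> 'a \<Rightarrow> bool) \<Rightarrow> 'a rel \<Rightarrow> bool" where
  "linearization P le L \<longleftrightarrow> L \<subseteq> P \<times> P \<and> refl_on P L \<and> trans L \<and> total_on P L \<and>
     (\<forall>x\<in>P. \<forall>y\<in>P. le x y \<longrightarrow> (x, y) \<in> L)"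

text \<open>The order type of a linear quasi-order L is that of the induced linear order
on the quotient by the equivalence L \<inter> L^-1.\<close>
definition quot_order :: "'a rel \<Rightarrow> 'a set rel" where
  "quot_order L = {(X, Y). X \<in> Field L // (L \<inter> L\<inverse>) \<and> Y \<in> Field L // (L \<inter> L\<inverse>) \<and>
     (\<exists>x\<in>X. \<exists>y\<in>Y. (x, y) \<in> L)}"

text \<open>o(P) = alpha: alpha is the supremum (least upper bound) of the order types of the
linearizations of P (order types compared via the well-order embeddings ordLeq / ordLess).\<close>
definition max_order_type :: "'a set \<Rightarrow> ('a \<Rightarrow> 'a \<Rightarrow> bool) \<Rightarrow> 'b rel \<Rightarrow> bool" where
  "max_order_type P le \<alpha> \<longleftrightarrow>
     (\<forall>L. linearization P le L \<longrightarrow> (quot_order L, \<alpha>) \<in> ordLeq) \<and>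
     (\<forall>\<beta> :: 'b rel. (\<beta>, \<alpha>) \<in> ordLess \<longrightarrow>
        (\<exists>L. linearization P le L \<and> (\<beta>, quot_order L) \<in> ordLess))"

end

theory Submission
  imports Defs
begin


primrec depth :: "'a tree \<Rightarrow> nat" where
  "depth (Leaf x) = 0"
| "depth (Node ts) = Suc (Max (insert 0 (fset (fimage depth ts))))"

lemma le_depth: "tree_le le s t \<Longrightarrow> depth s \<le> depth t"
proof (induction rule: tree_le.induct)
  case (node_node ss ts)
  have "Max (insert 0 (depth ` fset ss)) \<le> Max (insert 0 (depth ` fset ts))"
  proof (subst Max_le_iff, simp, simp, intro ballI)
    fix a assume "a \<in> insert 0 (depth ` fset ss)"
    then show "a \<le> Max (insert 0 (depth ` fset ts))"
    proof
      assume "a \<in> depth ` fset ss"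
      then obtain s where s: "s \<in> fset ss" "a = depth s" by auto
      with node_node obtain t where "t \<in> fset ts" "depth s \<le> depth t" by auto
      then show ?thesis using s by (meson Max_ge finite_fset finite_imageI finite_insert image_eqI insertI2 le_trans)
    qed simp
  qed
  then show ?case by simp
qed auto

lemma leaf_le: "in_Tf Q t \<Longrightarrow> tree_le one_le (Leaf ()) t"
proof (induction rule: in_Tf.induct)
  case (1 x)
  then show ?case by (auto intro: tree_le.intros simp: one_le_def)
next
  case (2 ts)
  then obtain t where "t \<in> fset ts" by (metis all_not_fin_conv)
  with 2 show ?case by (auto intro: tree_le.leaf_node)
qed

lemma depth_le: "in_Tf Q s \<Longrightarrow> in_Tf Q t \<Longrightarrow> depth s \<le> depth t \<Longrightarrow> tree_le one_le s t"
proof (induction arbitrary: t rule: in_Tf.induct)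
  case (1 x)
  then show ?case using leaf_le by (metis (full_types) old.unit.exhaust)
next
  case (2 ss t)
  from 2(3,4) obtain ts where t: "t = Node ts" "ts \<noteq> {||}" "\<forall>t\<in>fset ts. in_Tf Q t"
    by (cases t) (auto elim: in_Tf.cases)
  let ?M = "Max (insert 0 (depth ` fset ts))"
  have M: "Max (insert 0 (depth ` fset ss)) \<le> ?M" using 2(4) t by simp
  show ?case unfolding t(1)
  proof (rule tree_le.node_node, intro ballI)
    fix s assume s: "s \<in> fset ss"
    have ds: "depth s \<le> ?M" using M s by (meson Max_ge finite_fset finite_imageI finite_insert image_eqI insertI2 le_trans)
    have "?M \<in> insert 0 (depth ` fset ts)" by (rule Max_in) auto
    then obtain t' where t': "t' \<in> fset ts" "depth s \<le> depth t'"
    proof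
      assume "?M = 0"
      moreover obtain t' where "t' \<in> fset ts" using t(2) by (metis all_not_fin_conv)
      ultimately show ?thesis using ds that by auto
    next
      assume "?M \<in> depth ` fset ts"
      then show ?thesis using ds that by auto
    qed
    then show "\<exists>t\<in>fset ts. tree_le one_le s t" using 2(2) s t(3) by blast
  qed
qed

primrec chain :: "nat \<Rightarrow> unit tree" where
  "chain 0 = Leaf ()"
| "chain (Suc n) = Node {|chain n|}"

lemma chain_props: "in_Tf one_carrier (chain n) \<and> depth (chain n) = n"
  by (induction n) (auto intro: in_Tf.intros simp: one_carrier_def)

lemma ordIso_finite: "(r, r') \<in> ordIso \<Longrightarrow> finite (Field r) \<longleftrightarrow> finite (Field r')"
  unfolding ordIso_def iso_def by (auto dest: bij_betw_finite)



lemma quot_char: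
  assumes sub: "L \<subseteq> P \<times> P" and rf: "refl_on P L" and tr: "trans L"
    and dL: "\<And>s t. s \<in> P \<Longrightarrow> t \<in> P \<Longrightarrow> (d::'a \<Rightarrow> nat) s \<le> d t \<Longrightarrow> (s, t) \<in> L"
  shows "quot_order L = {(X, Y). X \<in> P // (L \<inter> L\<inverse>) \<and> Y \<in> P // (L \<inter> L\<inverse>) \<and>
            (LEAST n. n \<in> d ` X) \<le> (LEAST n. n \<in> d ` Y)}"
    and "inj_on (\<lambda>X. LEAST n. n \<in> d ` X) (P // (L \<inter> L\<inverse>))"
proof -
  define E where "E = L \<inter> L\<inverse>"
  define g where "g = (\<lambda>X. LEAST n. n \<in> d ` X)"
  have FL: "Field L = P" using sub rf unfolding Field_def refl_on_def by auto
  have eq: "equiv P E"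
  proof (rule equivI)
    show "E \<subseteq> P \<times> P" using sub unfolding E_def by blast
    show "refl_on P E" using sub rf unfolding E_def refl_on_def by auto
    show "sym E" unfolding E_def sym_def by auto
    show "trans E" using tr unfolding E_def trans_def by blast
  qed
  have cls: "X \<subseteq> P \<and> X \<noteq> {}" if "X \<in> P // E" for X
    using that eq by (metis equiv_def in_quotient_imp_non_empty in_quotient_imp_subset)
  have gmin: "\<exists>xm\<in>X. d xm = g X \<and> (\<forall>x\<in>X. g X \<le> d x)" if "X \<in> P // E" for X
  proof -
    from cls[OF that] obtain x where "x \<in> X" by auto
    then have "g X \<in> d ` X" unfolding g_def by (meson LeastI imageI)
    then show ?thesis unfolding g_def by (auto intro: Least_le)
  qed
  have inL: "(a, b) \<in> L" if "X \<in> P // E" "a \<in> X" "b \<in> X" for X a b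
    using in_quotient_imp_in_rel[OF eq that(1)] that unfolding E_def by auto
  have same: "X = Y" if "X \<in> P // E" "Y \<in> P // E" "a \<in> X" "b \<in> Y" "(a, b) \<in> L" "(b, a) \<in> L" for X Y a b
    using quotient_eq_iff[OF eq that(1,2,3,4)] that(5,6) unfolding E_def by auto
  have main1: "quot_order L = {(X, Y). X \<in> P // E \<and> Y \<in> P // E \<and> g X \<le> g Y}"
  proof (intro set_eqI iffI)
    fix p assume "p \<in> quot_order L"
    then obtain X Y x y where p: "p = (X, Y)" "X \<in> P // E" "Y \<in> P // E" "x \<in> X" "y \<in> Y" "(x, y) \<in> L"
      unfolding quot_order_def FL E_def by auto
    have "g X \<le> g Y"
    proof (rule ccontr)
      assume "\<not> g X \<le> g Y"
      obtain ym where ym: "ym \<in> Y" "d ym = g Y" using gmin[OF p(3)] by auto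
      have "g X \<le> d x" using gmin[OF p(2)] p(4) by auto
      moreover have "ym \<in> P" "x \<in> P" using cls[OF p(3)] cls[OF p(2)] ym(1) p(4) by auto
      ultimately have "(ym, x) \<in> L" using dL ym `\<not> g X \<le> g Y` by simp
      moreover have "(x, ym) \<in> L" using inL[OF p(3) p(5) ym(1)] p(6) tr unfolding trans_def by blast
      ultimately have "X = Y" using same[OF p(2,3,4) ym(1)] by auto
      then show False using `\<not> g X \<le> g Y` by auto
    qed
    then show "p \<in> {(X, Y). X \<in> P // E \<and> Y \<in> P // E \<and> g X \<le> g Y}" using p by auto
  next
    fix p assume "p \<in> {(X, Y). X \<in> P // E \<and> Y \<in> P // E \<and> g X \<le> g Y}"
    then obtain X Y where p: "p = (X, Y)" "X \<in> P // E" "Y \<in> P // E" "g X \<le> g Y" by auto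
    obtain xm where xm: "xm \<in> X" "d xm = g X" using gmin[OF p(2)] by auto
    obtain ym where ym: "ym \<in> Y" "d ym = g Y" using gmin[OF p(3)] by auto
    have "xm \<in> P" "ym \<in> P" using cls[OF p(2)] cls[OF p(3)] xm(1) ym(1) by auto
    then have "(xm, ym) \<in> L" using dL xm ym p by simp
    then show "p \<in> quot_order L" using p xm ym unfolding quot_order_def FL E_def by auto
  qed
  have main2: "inj_on g (P // E)"
  proof (rule inj_onI)
    fix X Y assume X: "X \<in> P // E" and Y: "Y \<in> P // E" and gg: "g X = g Y"
    obtain xm where xm: "xm \<in> X" "d xm = g X" using gmin[OF X] by auto
    obtain ym where ym: "ym \<in> Y" "d ym = g Y" using gmin[OF Y] by auto
    have "xm \<in> P" "ym \<in> P" using cls[OF X] cls[OF Y] xm(1) ym(1) by auto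
    then show "X = Y" using same[OF X Y xm(1) ym(1)] dL xm ym gg by simp
  qed
  show "quot_order L = {(X, Y). X \<in> P // (L \<inter> L\<inverse>) \<and> Y \<in> P // (L \<inter> L\<inverse>) \<and>
            (LEAST n. n \<in> d ` X) \<le> (LEAST n. n \<in> d ` Y)}"
    using main1 unfolding g_def E_def .
  show "inj_on (\<lambda>X. LEAST n. n \<in> d ` X) (P // (L \<inter> L\<inverse>))"
    using main2 unfolding g_def E_def .
qed

lemma wo_of:
  assumes "inj_on (g::'b \<Rightarrow> nat) C"
  defines "R \<equiv> {(X, Y). X \<in> C \<and> Y \<in> C \<and> g X \<le> g Y}"
  shows "Well_order R" "Field R = C" "\<And>X. finite (underS R X)"
proof -
  show F: "Field R = C" unfolding R_def Field_def by auto
  have "wf (R - Id)"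
  proof (rule wf_subset)
    show "wf (inv_image less_than g)" by simp
    show "R - Id \<subseteq> inv_image less_than g"
      using assms(1) unfolding R_def inj_on_def by (auto simp: le_less)
  qed
  moreover have "Linear_order R"
    unfolding linear_order_on_def partial_order_on_def preorder_on_def refl_on_def trans_def
      antisym_def total_on_def F
    using assms(1) unfolding R_def inj_on_def by auto
  ultimately show "Well_order R" unfolding well_order_on_def by simp
  fix X
  have "underS R X \<subseteq> {Y \<in> C. g Y < g X}"
    using assms(1) unfolding R_def underS_def inj_on_def by (auto simp: le_less)
  moreover have "finite {Y \<in> C. g Y < g X}"
  proof (rule finite_imageD)
    show "finite (g ` {Y \<in> C. g Y < g X})" by (rule finite_subset[of _ "{..<g X}"]) auto
    show "inj_on g {Y \<in> C. g Y < g X}" using assms(1) by (auto intro: inj_on_subset)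
  qed
  ultimately show "finite (underS R X)" by (rule finite_subset)
qed


lemma Tf_depth:
  "s \<in> Tf one_carrier \<Longrightarrow> t \<in> Tf one_carrier \<Longrightarrow> tree_le one_le s t \<longleftrightarrow> depth s \<le> depth t"
  unfolding Tf_def using le_depth depth_le by blast

lemma part1:
  assumes lin: "linearization (Tf one_carrier) (tree_le one_le) L"
  shows "(quot_order L, natLeq) \<in> ordLeq"
proof -
  let ?P = "Tf one_carrier"
  let ?C = "?P // (L \<inter> L\<inverse>)"
  let ?g = "\<lambda>X. LEAST n. n \<in> (depth :: unit tree \<Rightarrow> nat) ` X"
  have sub: "L \<subseteq> ?P \<times> ?P" and rf: "refl_on ?P L" and tr: "trans L"
    and ext: "\<forall>x\<in>?P. \<forall>y\<in>?P. tree_le one_le x y \<longrightarrow> (x, y) \<in> L"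
    using lin unfolding linearization_def by auto
  have dL: "\<And>s t. s \<in> ?P \<Longrightarrow> t \<in> ?P \<Longrightarrow> depth s \<le> depth t \<Longrightarrow> (s, t) \<in> L"
    using ext Tf_depth by blast
  note qc = quot_char[OF sub rf tr dL]
  note wo = wo_of[OF qc(2)]
  have W: "Well_order (quot_order L)" using wo(1) qc(1) by simp
  have fin: "finite (underS (quot_order L) X)" for X using wo(3) qc(1) by simp
  have "\<not> (natLeq, quot_order L) \<in> ordLess"
  proof
    assume "(natLeq, quot_order L) \<in> ordLess"
    then obtain a where a: "(natLeq, Restr (quot_order L) (underS (quot_order L) a)) \<in> ordIso"
      using ordLess_iff_ordIso_Restr[OF W natLeq_Well_order] by blast
    have "finite (Field (Restr (quot_order L) (underS (quot_order L) a)))"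
      by (rule finite_subset[OF _ fin[of a]]) (auto simp: Field_def)
    then have "finite (Field (natLeq :: (nat \<times> nat) set))" using ordIso_finite[OF a] by simp
    then show False by (simp add: Field_natLeq)
  qed
  then show ?thesis using ordLess_or_ordLeq[OF natLeq_Well_order W] by blast
qed

lemma part2:
  assumes "(\<beta>, natLeq) \<in> ordLess"
  shows "\<exists>L. linearization (Tf one_carrier) (tree_le one_le) L \<and> (\<beta>, quot_order L) \<in> ordLess"
proof -
  let ?P = "Tf one_carrier"
  define L where "L = {(s, t). s \<in> ?P \<and> t \<in> ?P \<and> depth s \<le> depth t}"
  let ?C = "?P // (L \<inter> L\<inverse>)"
  let ?g = "\<lambda>X. LEAST n. n \<in> (depth :: unit tree \<Rightarrow> nat) ` X"
  have lin: "linearization ?P (tree_le one_le) L"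
    unfolding linearization_def L_def refl_on_def trans_def total_on_def using Tf_depth by auto
  have sub: "L \<subseteq> ?P \<times> ?P" and rf: "refl_on ?P L" and tr: "trans L"
    using lin unfolding linearization_def by auto
  have dL: "\<And>s t. s \<in> ?P \<Longrightarrow> t \<in> ?P \<Longrightarrow> depth s \<le> depth t \<Longrightarrow> (s, t) \<in> L"
    unfolding L_def by auto
  note qc = quot_char[OF sub rf tr dL]
  note wo = wo_of[OF qc(2)]
  have W: "Well_order (quot_order L)" using wo(1) qc(1) by simp
  have F: "Field (quot_order L) = ?C" using wo(2) qc(1) by simp
  have "range (\<lambda>n. n) \<subseteq> ?g ` ?C"
  proof
    fix n :: nat assume "n \<in> range (\<lambda>n. n)"
    define X where "X = (L \<inter> L\<inverse>) `` {chain n}"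
    have cP: "chain n \<in> ?P" using chain_props unfolding Tf_def by auto
    have XC: "X \<in> ?C" unfolding X_def using cP by (rule quotientI)
    have "depth ` X = {n}"
    proof
      show "depth ` X \<subseteq> {n}" unfolding X_def L_def using chain_props[of n] by auto
      show "{n} \<subseteq> depth ` X" unfolding X_def L_def using chain_props[of n] cP by force
    qed
    then have "?g X = n" by (auto intro: Least_equality)
    then show "n \<in> ?g ` ?C" using XC by force
  qed
  then have "infinite ?C" using finite_subset by (metis finite_imageI infinite_UNIV_nat surj_def subset_iff rangeI UNIV_eq_I)
  then have "\<not> (quot_order L, natLeq) \<in> ordLess"
  proof -
    assume inf: "infinite ?C"
    show ?thesis
    proof
      assume "(quot_order L, natLeq) \<in> ordLess"
      then obtain a where a: "(quot_order L, Restr natLeq (underS natLeq a)) \<in> ordIso"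
        using ordLess_iff_ordIso_Restr[OF natLeq_Well_order W] by blast
      have "finite (underS natLeq a)" unfolding underS_def natLeq_def
        by (rule finite_subset[of _ "{..<a}"]) auto
      then have "finite (Field (Restr natLeq (underS natLeq a)))"
        by (rule finite_subset[rotated]) (auto simp: Field_def)
      then show False using ordIso_finite[OF a] F inf by simp
    qed
  qed
  then have "(natLeq, quot_order L) \<in> ordLeq" using ordLess_or_ordLeq[OF W natLeq_Well_order] by blast
  then show ?thesis using lin assms ordLess_ordLeq_trans by blast
qed

theorem lemma3p12:
  shows "max_order_type (Tf one_carrier) (tree_le one_le) natLeq"
  unfolding max_order_type_def using part1 part2 by blast

end
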